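(* Consider the second-order chemical equilibrium reaction $A + B \leftrightarrow 2C$ with equilibrium constant $K_e = [C]^2/([A][B])$, and let $X = V(K_e xy - z^2)\subset\mathbb{P}^2$, where $x,y,z$ are the coordinates corresponding to the normalized concentrations $[A]/c,[B]/c,[C]/c$ with $c=[A]+[B]+[C]>0$. Then the ML degree of $X$ is $1$ if $K_e=4$, $0$ if $K_e=0$, and $2$ for all other values of $K_e$.
   Context: Let $\mathcal{H}=\{p\in\mathbb{P}^n : p_0p_1\cdots p_n(p_0+\dots+p_n)=0\}$. For data $u=(u_0,\dots,u_n)\in\mathbb{N}^{n+1}$ let $\mathcal{L}_u = \frac{p_0^{u_0}\cdots p_n^{u_n}}{(p_0+\dots+p_n)^{u_0+\dots+u_n}}$. The maximum likelihood (ML) degree of a projective variety $X\subset\mathbb{P}^n$ is the number of complex critical points of $\mathcal{L}_u$ on $X_{\mathrm{reg}}\setminus\mathcal{H}$ for (generic) $u$, where $X_{\mathrm{reg}}$ is the set of smooth points of $X$. *)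

theory Defs
  imports "HOL-Analysis.Analysis"
begin

text \<open>Points of P^2 are represented by nonzero vectors of complex^3 (homogeneous
coordinates); a projective variety is represented by its affine cone.
Polynomials in three variables are coefficient functions on exponent triples
with finite support.\<close>

type_synonym poly3 = "nat \<times> nat \<times> nat \<Rightarrow> complex"

definition mpoly3 :: "poly3 \<Rightarrow> bool" where
  "mpoly3 c \<longleftrightarrow> finite {m. c m \<noteq> 0}"

definition peval3 :: "poly3 \<Rightarrow> complex^3 \<Rightarrow> complex" where
  "peval3 c p = (\<Sum>m\<in>{m. c m \<noteq> 0}.
      c m * (p$0) ^ fst m * (p$1) ^ fst (snd m) * (p$2) ^ snd (snd m))"

definition pdiff3 :: "3 \<Rightarrow> poly3 \<Rightarrow> poly3" where
  "pdiff3 i c = (\<lambda>(a, b, d).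
     if i = 0 then of_nat (a + 1) * c (a + 1, b, d)
     else if i = 1 then of_nat (b + 1) * c (a, b + 1, d)
     else of_nat (d + 1) * c (a, b, d + 1))"

definition grad3 :: "poly3 \<Rightarrow> complex^3 \<Rightarrow> complex^3" where
  "grad3 c p = (\<chi> i. peval3 (pdiff3 i c) p)"

definition vanishing_ideal :: "(complex^3) set \<Rightarrow> poly3 set" where
  "vanishing_ideal X = {g. mpoly3 g \<and> (\<forall>q\<in>X. peval3 g q = 0)}"

definition reg_point :: "(complex^3) set \<Rightarrow> complex^3 \<Rightarrow> bool" where
  "reg_point X p \<longleftrightarrow> p \<noteq> 0 \<and> p \<in> X \<and> (\<exists>g\<in>vanishing_ideal X. grad3 g p \<noteq> 0)"

definition tangent_space :: "(complex^3) set \<Rightarrow> complex^3 \<Rightarrow> (complex^3) set" where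
  "tangent_space X p = {v. \<forall>g\<in>vanishing_ideal X. (\<Sum>i\<in>UNIV. grad3 g p $ i * v $ i) = 0}"

definition in_H :: "complex^3 \<Rightarrow> bool" where
  "in_H p \<longleftrightarrow> p$0 * p$1 * p$2 * (p$0 + p$1 + p$2) = 0"

definition lik :: "nat^3 \<Rightarrow> complex^3 \<Rightarrow> complex" where
  "lik u p = (\<Prod>i\<in>UNIV. (p$i) ^ (u$i)) / (p$0 + p$1 + p$2) ^ (u$0 + u$1 + u$2)"

definition crit_point :: "(complex^3) set \<Rightarrow> nat^3 \<Rightarrow> complex^3 \<Rightarrow> bool" where
  "crit_point X u p \<longleftrightarrow> reg_point X p \<and> \<not> in_H p \<and>
     (\<exists>D. (lik u has_derivative D) (at p) \<and> (\<forall>v\<in>tangent_space X p. D v = 0))"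

definition proj_pt :: "complex^3 \<Rightarrow> (complex^3) set" where
  "proj_pt p = {t *s p | t. t \<noteq> 0}"

definition crit_points :: "(complex^3) set \<Rightarrow> nat^3 \<Rightarrow> (complex^3) set set" where
  "crit_points X u = proj_pt ` {p. crit_point X u p}"

definition is_ML_degree :: "(complex^3) set \<Rightarrow> nat \<Rightarrow> bool" where
  "is_ML_degree X d \<longleftrightarrow> (\<exists>Q. mpoly3 Q \<and> Q \<noteq> (\<lambda>_. 0) \<and>
     (\<forall>u::nat^3. peval3 Q (\<chi> i. of_nat (u$i)) \<noteq> 0 \<longrightarrow>
        finite (crit_points X u) \<and> card (crit_points X u) = d))"

definition Xconic :: "real \<Rightarrow> (complex^3) set" where
  "Xconic K = {p. complex_of_real K * p$0 * p$1 - (p$2)^2 = 0}"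

end

theory Submission
  imports Defs
begin


lemma UNIV3: "(UNIV::3 set) = {0,1,2}"
proof -
  have "(3::3) = 0" by simp
  then show ?thesis using UNIV_3 by auto
qed

lemma sum3: "sum f (UNIV::3 set) = f 0 + f 1 + f 2"
  unfolding UNIV3 by (simp add: ac_simps)
lemma prod3: "prod f (UNIV::3 set) = f 0 * f 1 * f 2"
  unfolding UNIV3 by (simp add: ac_simps)

lemma three_neq: "(2::3) \<noteq> 0" "(2::3) \<noteq> 1" "(1::3) \<noteq> 0" by simp_all

definition mono3 :: "nat\<times>nat\<times>nat \<Rightarrow> complex^3 \<Rightarrow> complex" where
  "mono3 m p = (p$0) ^ fst m * (p$1) ^ fst (snd m) * (p$2) ^ snd (snd m)"

lemma peval3_superset:
  assumes "finite M" "\<And>m. m \<notin> M \<Longrightarrow> c m = 0"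
  shows "peval3 c p = (\<Sum>m\<in>M. c m * mono3 m p)"
proof -
  have "peval3 c p = (\<Sum>m\<in>{m. c m \<noteq> 0}. c m * mono3 m p)"
    unfolding peval3_def mono3_def by (simp add: mult.assoc)
  also have "\<dots> = (\<Sum>m\<in>M. c m * mono3 m p)"
    by (rule sum.mono_neutral_left) (use assms in auto)
  finally show ?thesis .
qed

definition fK :: "real \<Rightarrow> poly3" where
  "fK K = (\<lambda>m. if m = (1,1,0) then complex_of_real K else if m = (0,0,2) then -1 else 0)"

lemma fK_mpoly: "mpoly3 (fK K)"
proof -
  have "{m. fK K m \<noteq> 0} \<subseteq> {(1,1,0),(0,0,2)}" by (auto simp: fK_def split: if_splits)
  then show ?thesis unfolding mpoly3_def using finite_subset by blast
qed

lemma fK_eval: "peval3 (fK K) p = complex_of_real K * p$0 * p$1 - (p$2)^2"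
  by (subst peval3_superset[where M="{(1,1,0),(0,0,2)}"]) (auto simp: fK_def mono3_def)

lemma fK_grad: "grad3 (fK K) p = (\<chi> i. if i = 0 then complex_of_real K * p$1 else if i = 1 then complex_of_real K * p$0 else -2 * p$2)"
proof -
  have 0: "peval3 (pdiff3 0 (fK K)) p = complex_of_real K * p$1"
    by (subst peval3_superset[where M="{(0,1,0)}"]) (auto simp: fK_def mono3_def pdiff3_def split: if_splits)
  have 1: "peval3 (pdiff3 1 (fK K)) p = complex_of_real K * p$0"
    by (subst peval3_superset[where M="{(1,0,0)}"]) (auto simp: fK_def mono3_def pdiff3_def split: if_splits)
  have 2: "peval3 (pdiff3 2 (fK K)) p = -2 * p$2"
    by (subst peval3_superset[where M="{(0,0,1)}"]) (auto simp: fK_def mono3_def pdiff3_def split: if_splits)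
  show ?thesis unfolding grad3_def vec_eq_iff
  proof
    fix i :: 3
    have "i = 0 \<or> i = 1 \<or> i = 2" using UNIV3 by blast
    then show "(\<chi> i. peval3 (pdiff3 i (fK K)) p) $ i = (\<chi> i. if i = 0 then complex_of_real K * p$1 else if i = 1 then complex_of_real K * p$0 else -2 * p$2) $ i"
      using 0 1 2 by auto
  qed
qed

lemma pdiff0_eval:
  assumes "mpoly3 h"
  shows "peval3 (pdiff3 0 h) q = (\<Sum>m\<in>{m. h m \<noteq> 0}. h m * of_nat (fst m) * q$0^(fst m - 1) * q$1^(fst (snd m)) * q$2^(snd (snd m)))"
proof -
  define S where "S = {m. h m \<noteq> 0}"
  define S' where "S' = {m\<in>S. fst m > 0}"
  define sh where "sh = (\<lambda>(a::nat,b::nat,d::nat). (a - 1, b, d))"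
  have fS: "finite S" using assms unfolding mpoly3_def S_def by simp
  have fS': "finite S'" using fS unfolding S'_def by simp
  have inj: "inj_on sh S'" unfolding inj_on_def S'_def sh_def by auto
  have "peval3 (pdiff3 0 h) q = (\<Sum>m\<in>sh ` S'. pdiff3 0 h m * mono3 m q)"
  proof (rule peval3_superset)
    show "finite (sh ` S')" using fS' by simp
    fix m assume m: "m \<notin> sh ` S'"
    obtain a b d where md: "m = (a,b,d)" by (cases m) auto
    show "pdiff3 0 h m = 0"
    proof (rule ccontr)
      assume "pdiff3 0 h m \<noteq> 0"
      then have "h (a+1,b,d) \<noteq> 0" by (simp add: pdiff3_def md)
      then have "(a+1,b,d) \<in> S'" unfolding S'_def S_def by simp
      then have "sh (a+1,b,d) \<in> sh ` S'" by blast
      then show False using m md by (simp add: sh_def)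
    qed
  qed
  also have "\<dots> = (\<Sum>m\<in>S'. pdiff3 0 h (sh m) * mono3 (sh m) q)"
    by (rule sum.reindex[OF inj, unfolded comp_def])
  also have "\<dots> = (\<Sum>m\<in>S'. h m * of_nat (fst m) * q$0^(fst m - 1) * q$1^(fst (snd m)) * q$2^(snd (snd m)))"
  proof (rule sum.cong[OF refl])
    fix m assume "m \<in> S'"
    then obtain a b d where md: "m = (a,b,d)" and "a > 0" unfolding S'_def by (cases m) auto
    then show "pdiff3 0 h (sh m) * mono3 (sh m) q = h m * of_nat (fst m) * q$0^(fst m - 1) * q$1^(fst (snd m)) * q$2^(snd (snd m))"
      by (simp add: sh_def pdiff3_def mono3_def md)
  qed
  also have "\<dots> = (\<Sum>m\<in>S. h m * of_nat (fst m) * q$0^(fst m - 1) * q$1^(fst (snd m)) * q$2^(snd (snd m)))"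
    by (rule sum.mono_neutral_left) (use fS in \<open>auto simp: S'_def\<close>)
  finally show ?thesis unfolding S_def .
qed

lemma pdiff1_eval:
  assumes "mpoly3 h"
  shows "peval3 (pdiff3 1 h) q = (\<Sum>m\<in>{m. h m \<noteq> 0}. h m * of_nat (fst (snd m)) * q$0^(fst m) * q$1^(fst (snd m) - 1) * q$2^(snd (snd m)))"
proof -
  define S where "S = {m. h m \<noteq> 0}"
  define S' where "S' = {m\<in>S. fst (snd m) > 0}"
  define sh where "sh = (\<lambda>(a::nat,b::nat,d::nat). (a, b - 1, d))"
  have fS: "finite S" using assms unfolding mpoly3_def S_def by simp
  have fS': "finite S'" using fS unfolding S'_def by simp
  have inj: "inj_on sh S'" unfolding inj_on_def S'_def sh_def by auto
  have "peval3 (pdiff3 1 h) q = (\<Sum>m\<in>sh ` S'. pdiff3 1 h m * mono3 m q)"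
  proof (rule peval3_superset)
    show "finite (sh ` S')" using fS' by simp
    fix m assume m: "m \<notin> sh ` S'"
    obtain a b d where md: "m = (a,b,d)" by (cases m) auto
    show "pdiff3 1 h m = 0"
    proof (rule ccontr)
      assume "pdiff3 1 h m \<noteq> 0"
      then have "h (a,b+1,d) \<noteq> 0" by (simp add: pdiff3_def md)
      then have "(a,b+1,d) \<in> S'" unfolding S'_def S_def by simp
      then have "sh (a,b+1,d) \<in> sh ` S'" by blast
      then show False using m md by (simp add: sh_def)
    qed
  qed
  also have "\<dots> = (\<Sum>m\<in>S'. pdiff3 1 h (sh m) * mono3 (sh m) q)"
    by (rule sum.reindex[OF inj, unfolded comp_def])
  also have "\<dots> = (\<Sum>m\<in>S'. h m * of_nat (fst (snd m)) * q$0^(fst m) * q$1^(fst (snd m) - 1) * q$2^(snd (snd m)))"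
  proof (rule sum.cong[OF refl])
    fix m assume "m \<in> S'"
    then obtain a b d where md: "m = (a,b,d)" and "b > 0" unfolding S'_def by (cases m) auto
    then show "pdiff3 1 h (sh m) * mono3 (sh m) q = h m * of_nat (fst (snd m)) * q$0^(fst m) * q$1^(fst (snd m) - 1) * q$2^(snd (snd m))"
      by (simp add: sh_def pdiff3_def mono3_def md)
  qed
  also have "\<dots> = (\<Sum>m\<in>S. h m * of_nat (fst (snd m)) * q$0^(fst m) * q$1^(fst (snd m) - 1) * q$2^(snd (snd m)))"
    by (rule sum.mono_neutral_left) (use fS in \<open>auto simp: S'_def\<close>)
  finally show ?thesis unfolding S_def .
qed

lemma pdiff2_eval:
  assumes "mpoly3 h"
  shows "peval3 (pdiff3 2 h) q = (\<Sum>m\<in>{m. h m \<noteq> 0}. h m * of_nat (snd (snd m)) * q$0^(fst m) * q$1^(fst (snd m)) * q$2^(snd (snd m) - 1))"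
proof -
  define S where "S = {m. h m \<noteq> 0}"
  define S' where "S' = {m\<in>S. snd (snd m) > 0}"
  define sh where "sh = (\<lambda>(a::nat,b::nat,d::nat). (a, b, d - 1))"
  have fS: "finite S" using assms unfolding mpoly3_def S_def by simp
  have fS': "finite S'" using fS unfolding S'_def by simp
  have inj: "inj_on sh S'" unfolding inj_on_def S'_def sh_def by auto
  have "peval3 (pdiff3 2 h) q = (\<Sum>m\<in>sh ` S'. pdiff3 2 h m * mono3 m q)"
  proof (rule peval3_superset)
    show "finite (sh ` S')" using fS' by simp
    fix m assume m: "m \<notin> sh ` S'"
    obtain a b d where md: "m = (a,b,d)" by (cases m) auto
    show "pdiff3 2 h m = 0"
    proof (rule ccontr)
      assume "pdiff3 2 h m \<noteq> 0"
      then have "h (a,b,d+1) \<noteq> 0" by (simp add: pdiff3_def md)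
      then have "(a,b,d+1) \<in> S'" unfolding S'_def S_def by simp
      then have "sh (a,b,d+1) \<in> sh ` S'" by blast
      then show False using m md by (simp add: sh_def)
    qed
  qed
  also have "\<dots> = (\<Sum>m\<in>S'. pdiff3 2 h (sh m) * mono3 (sh m) q)"
    by (rule sum.reindex[OF inj, unfolded comp_def])
  also have "\<dots> = (\<Sum>m\<in>S'. h m * of_nat (snd (snd m)) * q$0^(fst m) * q$1^(fst (snd m)) * q$2^(snd (snd m) - 1))"
  proof (rule sum.cong[OF refl])
    fix m assume "m \<in> S'"
    then obtain a b d where md: "m = (a,b,d)" and "d > 0" unfolding S'_def by (cases m) auto
    then show "pdiff3 2 h (sh m) * mono3 (sh m) q = h m * of_nat (snd (snd m)) * q$0^(fst m) * q$1^(fst (snd m)) * q$2^(snd (snd m) - 1)"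
      by (simp add: sh_def pdiff3_def mono3_def md)
  qed
  also have "\<dots> = (\<Sum>m\<in>S. h m * of_nat (snd (snd m)) * q$0^(fst m) * q$1^(fst (snd m)) * q$2^(snd (snd m) - 1))"
    by (rule sum.mono_neutral_left) (use fS in \<open>auto simp: S'_def\<close>)
  finally show ?thesis unfolding S_def .
qed

lemma peval3_deriv:
  assumes h: "mpoly3 h"
    and d: "\<And>i. ((\<lambda>t. \<gamma> t $ i) has_field_derivative d i) (at t0)"
  shows "((\<lambda>t. peval3 h (\<gamma> t)) has_field_derivative (\<Sum>i\<in>UNIV. grad3 h (\<gamma> t0) $ i * d i)) (at t0)"
proof -
  define S where "S = {m. h m \<noteq> 0}"
  define q where "q = \<gamma> t0"
  have e: "(\<lambda>t. peval3 h (\<gamma> t)) = (\<lambda>t. \<Sum>m\<in>S. h m * (\<gamma> t$0) ^ fst m * (\<gamma> t$1) ^ fst (snd m) * (\<gamma> t$2) ^ snd (snd m))"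
    unfolding peval3_def S_def by simp
  have D: "((\<lambda>t. \<Sum>m\<in>S. h m * (\<gamma> t$0) ^ fst m * (\<gamma> t$1) ^ fst (snd m) * (\<gamma> t$2) ^ snd (snd m)) has_field_derivative
     (\<Sum>m\<in>S. h m * (of_nat (fst m) * d 0 * q$0^(fst m - 1) * q$1 ^ fst (snd m) * q$2 ^ snd (snd m)
        + q$0 ^ fst m * (of_nat (fst (snd m)) * d 1 * q$1^(fst (snd m) - 1)) * q$2 ^ snd (snd m)
        + q$0 ^ fst m * q$1 ^ fst (snd m) * (of_nat (snd (snd m)) * d 2 * q$2^(snd (snd m) - 1))))) (at t0)"
    unfolding q_def
  proof (rule DERIV_sum)
    fix m
    show "((\<lambda>t. h m * (\<gamma> t$0) ^ fst m * (\<gamma> t$1) ^ fst (snd m) * (\<gamma> t$2) ^ snd (snd m)) has_field_derivative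
     (h m * (of_nat (fst m) * d 0 * \<gamma> t0$0^(fst m - 1) * \<gamma> t0$1 ^ fst (snd m) * \<gamma> t0$2 ^ snd (snd m)
        + \<gamma> t0$0 ^ fst m * (of_nat (fst (snd m)) * d 1 * \<gamma> t0$1^(fst (snd m) - 1)) * \<gamma> t0$2 ^ snd (snd m)
        + \<gamma> t0$0 ^ fst m * \<gamma> t0$1 ^ fst (snd m) * (of_nat (snd (snd m)) * d 2 * \<gamma> t0$2^(snd (snd m) - 1))))) (at t0)"
      apply (rule derivative_eq_intros d refl)+
      apply (simp add: algebra_simps)
      done
  qed
  have g: "(\<Sum>i\<in>UNIV. grad3 h q $ i * d i) = (\<Sum>m\<in>S. h m * (of_nat (fst m) * d 0 * q$0^(fst m - 1) * q$1 ^ fst (snd m) * q$2 ^ snd (snd m)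
        + q$0 ^ fst m * (of_nat (fst (snd m)) * d 1 * q$1^(fst (snd m) - 1)) * q$2 ^ snd (snd m)
        + q$0 ^ fst m * q$1 ^ fst (snd m) * (of_nat (snd (snd m)) * d 2 * q$2^(snd (snd m) - 1))))"
    unfolding sum3 grad3_def vec_lambda_beta pdiff0_eval[OF h] pdiff1_eval[OF h] pdiff2_eval[OF h] S_def
    by (simp add: sum_distrib_left sum.distrib distrib_left mult_ac)
  show ?thesis unfolding e using D g q_def by simp
qed

lemma curve_orth:
  assumes h: "h \<in> vanishing_ideal X" and g: "\<And>t. \<gamma> t \<in> X"
    and d: "\<And>i. ((\<lambda>t. \<gamma> t $ i) has_field_derivative d i) (at 0)"
  shows "(\<Sum>i\<in>UNIV. grad3 h (\<gamma> 0) $ i * d i) = 0"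
proof -
  have hm: "mpoly3 h" and hv: "\<And>q. q \<in> X \<Longrightarrow> peval3 h q = 0"
    using h unfolding vanishing_ideal_def by auto
  have "((\<lambda>t. peval3 h (\<gamma> t)) has_field_derivative (\<Sum>i\<in>UNIV. grad3 h (\<gamma> 0) $ i * d i)) (at 0)"
    by (rule peval3_deriv[OF hm d])
  moreover have "(\<lambda>t. peval3 h (\<gamma> t)) = (\<lambda>t. 0)" using hv g by auto
  ultimately have "((\<lambda>t. 0) has_field_derivative (\<Sum>i\<in>UNIV. grad3 h (\<gamma> 0) $ i * d i)) (at (0::complex))"
    by simp
  moreover have "((\<lambda>t. 0) has_field_derivative 0) (at (0::complex))" by simp
  ultimately show ?thesis using DERIV_unique by blast
qed

lemma fK_van: "fK K \<in> vanishing_ideal (Xconic K)"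
  unfolding vanishing_ideal_def Xconic_def using fK_mpoly fK_eval by auto

lemma tangent_conic:
  assumes K: "K \<noteq> 0" and pX: "p \<in> Xconic K"
    and x: "p$0 \<noteq> 0" and y: "p$1 \<noteq> 0" and z: "p$2 \<noteq> 0"
  shows "tangent_space (Xconic K) p =
     {v. complex_of_real K * p$1 * v$0 + complex_of_real K * p$0 * v$1 - 2 * p$2 * v$2 = 0}"
proof (intro set_eqI iffI)
  fix v :: "complex^3" assume "v \<in> tangent_space (Xconic K) p"
  then have "(\<Sum>i\<in>UNIV. grad3 (fK K) p $ i * v $ i) = 0"
    using fK_van unfolding tangent_space_def by blast
  then show "v \<in> {v. complex_of_real K * p$1 * v$0 + complex_of_real K * p$0 * v$1 - 2 * p$2 * v$2 = 0}"
    unfolding fK_grad sum3 by simp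
next
  fix v :: "complex^3" assume "v \<in> {v. complex_of_real K * p$1 * v$0 + complex_of_real K * p$0 * v$1 - 2 * p$2 * v$2 = 0}"
  then have gv: "complex_of_real K * p$1 * v$0 + complex_of_real K * p$0 * v$1 - 2 * p$2 * v$2 = 0" by simp
  have pe: "complex_of_real K * p$0 * p$1 = (p$2)^2" using pX unfolding Xconic_def by simp
  show "v \<in> tangent_space (Xconic K) p"
    unfolding tangent_space_def
  proof (intro CollectI ballI)
    fix h assume h: "h \<in> vanishing_ideal (Xconic K)"
    define G where "G = grad3 h p"
    define \<gamma>1 where "\<gamma>1 = (\<lambda>t::complex. (1 + t) *s p)"
    have "(\<Sum>i\<in>UNIV. grad3 h (\<gamma>1 0) $ i * p $ i) = 0"
    proof (rule curve_orth[OF h])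
      fix t show "\<gamma>1 t \<in> Xconic K"
        using pe unfolding \<gamma>1_def Xconic_def by (simp add: power2_eq_square algebra_simps)
    next
      fix i show "((\<lambda>t. \<gamma>1 t $ i) has_field_derivative p $ i) (at 0)"
        unfolding \<gamma>1_def by (auto intro!: derivative_eq_intros)
    qed
    then have o1: "G$0 * p$0 + G$1 * p$1 + G$2 * p$2 = 0"
      unfolding G_def \<gamma>1_def sum3 by simp
    define \<gamma>2 where "\<gamma>2 = (\<lambda>t::complex. (\<chi> i. if i = 0 then p$0 * (1+t)^2 else if i = 1 then p$1 else p$2 * (1+t)) :: complex^3)"
    have "(\<Sum>i\<in>UNIV. grad3 h (\<gamma>2 0) $ i * (if i = 0 then 2 * p$0 else if i = 1 then 0 else p$2)) = 0"
    proof (rule curve_orth[OF h])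
      fix t show "\<gamma>2 t \<in> Xconic K"
        using pe three_neq unfolding \<gamma>2_def Xconic_def
        by (simp add: power2_eq_square algebra_simps)
    next
      fix i :: 3
      have "i = 0 \<or> i = 1 \<or> i = 2" using UNIV3 by blast
      then show "((\<lambda>t. \<gamma>2 t $ i) has_field_derivative (if i = 0 then 2 * p$0 else if i = 1 then 0 else p$2)) (at 0)"
        unfolding \<gamma>2_def using three_neq by (auto intro!: derivative_eq_intros)
    qed
    moreover have "\<gamma>2 0 = p"
      unfolding \<gamma>2_def vec_eq_iff
    proof
      fix i :: 3
      have "i = 0 \<or> i = 1 \<or> i = 2" using UNIV3 by blast
      then show "(\<chi> i. if i = 0 then p$0 * (1+0)^2 else if i = 1 then p$1 else p$2 * (1+0)) $ i = p $ i" by auto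
    qed
    ultimately have o2: "G$0 * (2 * p$0) + G$2 * p$2 = 0"
      unfolding G_def sum3 using three_neq by simp
    define \<alpha> where "\<alpha> = v$1 / p$1"
    define \<beta> where "\<beta> = (v$0 - \<alpha> * p$0) / (2 * p$0)"
    have v0: "v$0 = \<alpha> * p$0 + \<beta> * (2 * p$0)" unfolding \<beta>_def using x by (simp add: field_simps)
    have v1: "v$1 = \<alpha> * p$1" unfolding \<alpha>_def using y by simp
    have v2: "v$2 = \<alpha> * p$2 + \<beta> * p$2"
    proof -
      have "2 * p$2 * v$2 = complex_of_real K * p$1 * v$0 + complex_of_real K * p$0 * v$1" using gv by simp
      also have "\<dots> = complex_of_real K * p$0 * p$1 * (v$0 / p$0 + v$1 / p$1)"
        using x y by (simp add: field_simps)
      also have "\<dots> = (p$2)^2 * (v$0 / p$0 + v$1 / p$1)" using pe by simp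
      also have "\<dots> = 2 * p$2 * (\<alpha> * p$2 + \<beta> * p$2)"
        unfolding \<alpha>_def \<beta>_def using x y by (simp add: field_simps power2_eq_square)
      finally show ?thesis using z by simp
    qed
    have "(\<Sum>i\<in>UNIV. grad3 h p $ i * v $ i) = G$0 * v$0 + G$1 * v$1 + G$2 * v$2"
      unfolding G_def sum3 by simp
    also have "\<dots> = \<alpha> * (G$0 * p$0 + G$1 * p$1 + G$2 * p$2) + \<beta> * (G$0 * (2 * p$0) + G$2 * p$2)"
      unfolding v0 v1 v2 by (simp add: algebra_simps)
    also have "\<dots> = 0" using o1 o2 by simp
    finally show "(\<Sum>i\<in>UNIV. grad3 h p $ i * v $ i) = 0" .
  qed
qed



lemma nth_deriv[derivative_intros]: "((\<lambda>q::complex^3. q$i) has_derivative (\<lambda>v. v$i)) F"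
  by (rule bounded_linear_imp_has_derivative[OF bounded_linear_vec_nth])

lemma pow_m1: "(x::complex) \<noteq> 0 \<Longrightarrow> of_nat a * h * x^(a - 1) = of_nat a * h * x^a / x"
  by (cases a) auto

lemma lik_alt: "lik u q = (q$0^(u$0) * q$1^(u$1) * q$2^(u$2)) / (q$0+q$1+q$2)^(u$0+u$1+u$2)"
  unfolding lik_def prod3 by simp

lemma inH_iff: "\<not> in_H p \<longleftrightarrow> p$0 \<noteq> 0 \<and> p$1 \<noteq> 0 \<and> p$2 \<noteq> 0 \<and> p$0+p$1+p$2 \<noteq> 0"
  unfolding in_H_def by simp

lemma lik_deriv:
  assumes "\<not> in_H p"
  shows "(lik u has_derivative (\<lambda>v. lik u p * (of_nat (u$0) / p$0 * v$0 + of_nat (u$1) / p$1 * v$1 + of_nat (u$2) / p$2 * v$2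
      - of_nat (u$0+u$1+u$2) / (p$0+p$1+p$2) * (v$0+v$1+v$2)))) (at p)"
proof -
  have nz: "p$0 \<noteq> 0" "p$1 \<noteq> 0" "p$2 \<noteq> 0" "p$0+p$1+p$2 \<noteq> 0" using assms inH_iff by auto
  have e: "lik u = (\<lambda>q. (q$0^(u$0) * q$1^(u$1) * q$2^(u$2)) / (q$0+q$1+q$2)^(u$0+u$1+u$2))"
    using lik_alt by auto
  define n where "n = u$0+u$1+u$2"
  have r: "\<And>h. complex_of_nat (u$0) * h * p$0^(u$0 - 1) = complex_of_nat (u$0) * h * p$0^(u$0) / p$0"
          "\<And>h. complex_of_nat (u$1) * h * p$1^(u$1 - 1) = complex_of_nat (u$1) * h * p$1^(u$1) / p$1"
          "\<And>h. complex_of_nat (u$2) * h * p$2^(u$2 - 1) = complex_of_nat (u$2) * h * p$2^(u$2) / p$2"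
          "\<And>h. complex_of_nat n * h * (p$0+p$1+p$2)^(n - 1) = complex_of_nat n * h * (p$0+p$1+p$2)^n / (p$0+p$1+p$2)"
    using pow_m1 nz by blast+
  define X where "X = p$0^(u$0)"
  define Y where "Y = p$1^(u$1)"
  define Z where "Z = p$2^(u$2)"
  define T where "T = (p$0+p$1+p$2)^n"
  have T: "T \<noteq> 0" using nz T_def by simp
  define S where "S = p$0+p$1+p$2"
  have S: "S \<noteq> 0" using nz S_def by simp
  show ?thesis unfolding e n_def[symmetric]
    apply (rule derivative_eq_intros refl)+
     apply (use T in \<open>simp add: T_def\<close>)
    apply (rule ext)
    apply (simp only: r)
    apply (unfold X_def[symmetric] Y_def[symmetric] Z_def[symmetric] T_def[symmetric] S_def[symmetric])
    using nz T S by (simp add: field_simps)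
qed



lemma key:
  fixes x y z k a b c :: complex
  assumes k: "k \<noteq> 0" and x: "x \<noteq> 0" and y: "y \<noteq> 0" and z: "z \<noteq> 0"
    and S0: "x+y+z \<noteq> 0" and X: "k*x*y = z^2"
  shows "(\<forall>v::complex^3. k*y* v$0 + k*x* v$1 - 2*z* v$2 = 0 \<longrightarrow>
            a/x* v$0 + b/y* v$1 + c/z* v$2 - (a+b+c)/(x+y+z)*(v$0+v$1+v$2) = 0)
         \<longleftrightarrow> (2*a+c)*z^2 + (a-b)*k*x*z - (2*b+c)*k*x^2 = 0"
proof -
  define S where "S = x+y+z"
  define n where "n = a+b+c"
  have S: "S \<noteq> 0" using S0 S_def by simp
  define W0 where "W0 = a*S - n*x"
  define W1 where "W1 = b*S - n*y"
  define W2 where "W2 = c*S - n*z"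
  define w0 where "w0 = a/x - n/S"
  define w1 where "w1 = b/y - n/S"
  define w2 where "w2 = c/z - n/S"
  have w0W: "w0 = W0/(x*S)" unfolding w0_def W0_def using x S by (simp add: field_simps)
  have w1W: "w1 = W1/(y*S)" unfolding w1_def W1_def using y S by (simp add: field_simps)
  have w2W: "w2 = W2/(z*S)" unfolding w2_def W2_def using z S by (simp add: field_simps)
  have dot: "\<And>v0 v1 v2. a/x* v0 + b/y* v1 + c/z* v2 - (a+b+c)/(x+y+z)*(v0+v1+v2) = w0* v0 + w1* v1 + w2* v2"
    unfolding w0_def w1_def w2_def n_def S_def by (simp add: algebra_simps add_divide_distrib[symmetric])
  have F1: "k*x*(2*W0+W2) = (2*a+c)*z^2 + (a-b)*k*x*z - (2*b+c)*k*x^2"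
    unfolding W0_def W2_def S_def n_def using X by algebra
  have F2: "W0+W1+W2 = 0" unfolding W0_def W1_def W2_def S_def n_def by (simp add: algebra_simps)
  have ky: "k*y = z^2/x" using X x by (simp add: field_simps)
  have F3: "w0*(-2*z) - w2*(k*y) = -z*(2*W0+W2)/(x*S)"
    unfolding w0W w2W ky using x z S by (simp add: field_simps power2_eq_square)
  have F4: "w1*(k*y) - w0*(k*x) = k*(W1-W0)/S"
    unfolding w0W w1W using x y S by (simp add: field_simps)
  show ?thesis unfolding dot
  proof
    assume H: "\<forall>v::complex^3. k*y* v$0 + k*x* v$1 - 2*z* v$2 = 0 \<longrightarrow> w0* v$0 + w1* v$1 + w2* v$2 = 0"
    define v :: "complex^3" where "v = (\<chi> i. if i = 0 then -2*z else if i = 1 then 0 else -(k*y))"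
    have vs: "v$0 = -2*z" "v$1 = 0" "v$2 = -(k*y)" unfolding v_def using three_neq by auto
    have "w0* v$0 + w1* v$1 + w2* v$2 = 0" using H[rule_format, of v] vs by (simp add: algebra_simps)
    then have "w0*(-2*z) + w2*(-(k*y)) = 0" using vs by simp
    then have "w0*(-2*z) - w2*(k*y) = 0" by simp
    then have "z*(2*W0+W2)/(x*S) = 0" using F3 by simp
    then have "2*W0+W2 = 0" using x z S by simp
    then show "(2*a+c)*z^2 + (a-b)*k*x*z - (2*b+c)*k*x^2 = 0" using F1 by simp
  next
    assume Q: "(2*a+c)*z^2 + (a-b)*k*x*z - (2*b+c)*k*x^2 = 0"
    then have e1: "2*W0+W2 = 0" using F1 k x by simp
    then have e2: "W1 = W0" using F2 by algebra
    have r2: "w2*(k*y) = w0*(-2*z)" using F3 e1 by simp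
    have r1: "w1*(k*y) = w0*(k*x)" using F4 e2 by simp
    show "\<forall>v::complex^3. k*y* v$0 + k*x* v$1 - 2*z* v$2 = 0 \<longrightarrow> w0* v$0 + w1* v$1 + w2* v$2 = 0"
    proof (intro allI impI)
      fix v :: "complex^3"
      assume gv: "k*y* v$0 + k*x* v$1 - 2*z* v$2 = 0"
      have "(k*y)*(w0* v$0 + w1* v$1 + w2* v$2) = w0*(k*y* v$0) + (w1*(k*y))* v$1 + (w2*(k*y))* v$2"
        by (simp add: algebra_simps)
      also have "\<dots> = w0*(k*y* v$0 + k*x* v$1 - 2*z* v$2)" unfolding r1 r2 by (simp add: algebra_simps)
      also have "\<dots> = 0" using gv by simp
      finally show "w0* v$0 + w1* v$1 + w2* v$2 = 0" using k y by simp
    qed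
  qed
qed



lemma crit_iff:
  assumes K: "K \<noteq> 0" and pX: "p \<in> Xconic K" and nH: "\<not> in_H p"
  shows "crit_point (Xconic K) u p \<longleftrightarrow>
    (2* of_nat (u$0) + of_nat (u$2))*(p$2)^2 + ( of_nat (u$0) - of_nat (u$1))*complex_of_real K*p$0*p$2
      - (2* of_nat (u$1) + of_nat (u$2))*complex_of_real K*(p$0)^2 = 0"
proof -
  have nz: "p$0 \<noteq> 0" "p$1 \<noteq> 0" "p$2 \<noteq> 0" "p$0+p$1+p$2 \<noteq> 0" using nH inH_iff by auto
  have k: "complex_of_real K \<noteq> 0" using K by simp
  have X: "complex_of_real K * p$0 * p$1 = (p$2)^2" using pX unfolding Xconic_def by simp
  have reg: "reg_point (Xconic K) p"
    unfolding reg_point_def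
  proof (intro conjI bexI)
    show "p \<noteq> 0" using nz by auto
    show "p \<in> Xconic K" by (rule pX)
    show "fK K \<in> vanishing_ideal (Xconic K)" by (rule fK_van)
    have "grad3 (fK K) p $ 2 \<noteq> 0" unfolding fK_grad using nz three_neq by simp
    then show "grad3 (fK K) p \<noteq> 0" by auto
  qed
  define D where "D = (\<lambda>v::complex^3. lik u p * ( of_nat (u$0) / p$0 * v$0 + of_nat (u$1) / p$1 * v$1 + of_nat (u$2) / p$2 * v$2
      - of_nat (u$0+u$1+u$2) / (p$0+p$1+p$2) * (v$0+v$1+v$2)))"
  have hD: "(lik u has_derivative D) (at p)" unfolding D_def by (rule lik_deriv[OF nH])
  have L: "lik u p \<noteq> 0" unfolding lik_alt using nz by simp
  have c1: "crit_point (Xconic K) u p \<longleftrightarrow> (\<forall>v\<in>tangent_space (Xconic K) p. D v = 0)"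
    unfolding crit_point_def using reg nH hD has_derivative_unique by blast
  also have "\<dots> \<longleftrightarrow> (\<forall>v::complex^3. complex_of_real K*p$1* v$0 + complex_of_real K*p$0* v$1 - 2*p$2* v$2 = 0 \<longrightarrow>
            of_nat (u$0)/p$0* v$0 + of_nat (u$1)/p$1* v$1 + of_nat (u$2)/p$2* v$2
              - ( of_nat (u$0)+ of_nat (u$1)+ of_nat (u$2))/(p$0+p$1+p$2)*(v$0+v$1+v$2) = 0)"
    unfolding tangent_conic[OF K pX nz(1-3)] D_def using L by simp
  also have "\<dots> \<longleftrightarrow> (2* of_nat (u$0) + of_nat (u$2))*(p$2)^2 + ( of_nat (u$0) - of_nat (u$1))*complex_of_real K*p$0*p$2
      - (2* of_nat (u$1) + of_nat (u$2))*complex_of_real K*(p$0)^2 = 0"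
    by (rule key[OF k nz X])
  finally show ?thesis .
qed



lemma proj_pt_scale: "t \<noteq> 0 \<Longrightarrow> proj_pt (t *s P) = proj_pt P"
  unfolding proj_pt_def
proof (intro set_eqI iffI)
  fix q assume t: "t \<noteq> 0" and "q \<in> {s *s (t *s P) |s. s \<noteq> 0}"
  then obtain s where "s \<noteq> 0" "q = s *s (t *s P)" by blast
  then show "q \<in> {s *s P |s. s \<noteq> 0}" using t by (auto intro!: exI[of _ "s*t"] simp: vector_smult_assoc)
next
  fix q assume t: "t \<noteq> 0" and "q \<in> {s *s P |s. s \<noteq> 0}"
  then obtain s where "s \<noteq> 0" "q = s *s P" by blast
  then show "q \<in> {s *s (t *s P) |s. s \<noteq> 0}" using t by (auto intro!: exI[of _ "s/t"] simp: vector_smult_assoc)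
qed

lemma proj_pt_self: "P \<in> proj_pt P"
  unfolding proj_pt_def by (auto intro!: exI[of _ 1])

definition Pt :: "complex \<Rightarrow> complex \<Rightarrow> complex^3" where
  "Pt k r = (\<chi> i. if i = 0 then 1 else if i = 1 then r^2/k else r)"

lemma Pt_nth[simp]: "Pt k r $ 0 = 1" "Pt k r $ 1 = r^2/k" "Pt k r $ 2 = r"
  unfolding Pt_def using three_neq by auto

definition quadf :: "nat^3 \<Rightarrow> complex \<Rightarrow> complex \<Rightarrow> complex \<Rightarrow> complex" where
  "quadf u k x z = (2 * of_nat (u$0) + of_nat (u$2))*z^2 + (of_nat (u$0) - of_nat (u$1))*k*x*z
      - (2 * of_nat (u$1) + of_nat (u$2))*k*x^2"

definition goodr :: "nat^3 \<Rightarrow> complex \<Rightarrow> complex \<Rightarrow> bool" where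
  "goodr u k r \<longleftrightarrow> quadf u k 1 r = 0 \<and> r \<noteq> 0 \<and> 1 + r^2/k + r \<noteq> 0"

lemma crit_points_eq:
  assumes K: "K \<noteq> 0"
  shows "crit_points (Xconic K) u = (\<lambda>r. proj_pt (Pt (complex_of_real K) r)) ` {r. goodr u (complex_of_real K) r}"
    and "inj_on (\<lambda>r. proj_pt (Pt (complex_of_real K) r)) {r. goodr u (complex_of_real K) r}"
proof -
  define k where "k = complex_of_real K"
  have k: "k \<noteq> 0" using K k_def by simp
  have ci: "\<And>p. p \<in> Xconic K \<Longrightarrow> \<not> in_H p \<Longrightarrow> crit_point (Xconic K) u p \<longleftrightarrow> quadf u k (p$0) (p$2) = 0"
    using crit_iff[OF K] unfolding quadf_def k_def by blast
  show "crit_points (Xconic K) u = (\<lambda>r. proj_pt (Pt (complex_of_real K) r)) ` {r. goodr u (complex_of_real K) r}"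
    unfolding k_def[symmetric] crit_points_def
  proof (intro set_eqI iffI)
    fix A assume "A \<in> proj_pt ` {p. crit_point (Xconic K) u p}"
    then obtain p where A: "A = proj_pt p" and cp: "crit_point (Xconic K) u p" by blast
    have nH: "\<not> in_H p" and pX: "p \<in> Xconic K" using cp unfolding crit_point_def reg_point_def by auto
    have nz: "p$0 \<noteq> 0" "p$1 \<noteq> 0" "p$2 \<noteq> 0" "p$0+p$1+p$2 \<noteq> 0" using nH inH_iff by auto
    have X: "k * p$0 * p$1 = (p$2)^2" using pX unfolding Xconic_def k_def by simp
    have q: "quadf u k (p$0) (p$2) = 0" using ci[OF pX nH] cp by simp
    define r where "r = p$2 / p$0"
    have p1: "p$1 = p$0 * (r^2/k)" unfolding r_def using X nz k by (simp add: field_simps power2_eq_square)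
    have p2: "p$2 = p$0 * r" unfolding r_def using nz by simp
    have pe: "p = p$0 *s Pt k r"
      unfolding vec_eq_iff
    proof
      fix i :: 3
      have "i = 0 \<or> i = 1 \<or> i = 2" using UNIV3 by blast
      then show "p $ i = (p$0 *s Pt k r) $ i" using p1 p2 by auto
    qed
    have "quadf u k (p$0) (p$2) = (p$0)^2 * quadf u k 1 r"
      unfolding quadf_def p2 by (simp add: algebra_simps power2_eq_square)
    then have g1: "quadf u k 1 r = 0" using q nz by simp
    have g2: "r \<noteq> 0" using nz unfolding r_def by simp
    have "p$0+p$1+p$2 = p$0 * (1 + r^2/k + r)" unfolding p1 p2 by (simp add: algebra_simps)
    then have g3: "1 + r^2/k + r \<noteq> 0" using nz by auto
    have "A = proj_pt (Pt k r)" unfolding A using proj_pt_scale[of "p$0" "Pt k r"] pe nz by metis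
    then show "A \<in> (\<lambda>r. proj_pt (Pt k r)) ` {r. goodr u k r}"
      using g1 g2 g3 unfolding goodr_def by blast
  next
    fix A assume "A \<in> (\<lambda>r. proj_pt (Pt k r)) ` {r. goodr u k r}"
    then obtain r where A: "A = proj_pt (Pt k r)" and g: "goodr u k r" by blast
    have pX: "Pt k r \<in> Xconic K" unfolding Xconic_def k_def[symmetric] using k by simp
    have nH: "\<not> in_H (Pt k r)" unfolding inH_iff using g k unfolding goodr_def by simp
    have "crit_point (Xconic K) u (Pt k r)" using ci[OF pX nH] g unfolding goodr_def by simp
    then show "A \<in> proj_pt ` {p. crit_point (Xconic K) u p}" using A by blast
  qed
  show "inj_on (\<lambda>r. proj_pt (Pt (complex_of_real K) r)) {r. goodr u (complex_of_real K) r}"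
    unfolding k_def[symmetric]
  proof (rule inj_onI)
    fix r s assume "proj_pt (Pt k r) = proj_pt (Pt k s)"
    then have "Pt k r \<in> proj_pt (Pt k s)" using proj_pt_self by metis
    then obtain t where "Pt k r = t *s Pt k s" unfolding proj_pt_def by blast
    then have "Pt k r $ 0 = t * Pt k s $ 0" "Pt k r $ 2 = t * Pt k s $ 2" by auto
    then show "r = s" by simp
  qed
qed



lemma roots_general:
  fixes k a b c :: complex
  assumes k: "k \<noteq> 0" and k4: "k \<noteq> 4" and A: "2*a+c \<noteq> 0" and Bc: "2*b+c \<noteq> 0" and n: "a+b+c \<noteq> 0"
    and Dq: "(a-b)^2*k + 4*(2*a+c)*(2*b+c) \<noteq> 0"
  shows "\<exists>r1 r2. r1 \<noteq> r2 \<and> {r. (2*a+c)*r^2 + (a-b)*k*1*r - (2*b+c)*k*1^2 = 0 \<and> r \<noteq> 0 \<and> 1 + r^2/k + r \<noteq> 0} = {r1, r2}"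
proof -
  define AA where "AA = 2*a+c"
  define BB where "BB = (a-b)*k"
  define CC where "CC = -(2*b+c)*k"
  define s where "s = csqrt (BB^2 - 4*AA*CC)"
  have s2: "s^2 = BB^2 - 4*AA*CC" unfolding s_def by simp
  have disc: "BB^2 - 4*AA*CC = k*((a-b)^2*k + 4*(2*a+c)*(2*b+c))"
    unfolding AA_def BB_def CC_def by (simp add: algebra_simps power2_eq_square)
  have s0: "s \<noteq> 0" using s2 disc k Dq by auto
  have AA: "AA \<noteq> 0" using A AA_def by simp
  have CC: "CC \<noteq> 0" using Bc k unfolding CC_def by (metis minus_mult_left mult_eq_0_iff neg_equal_0_iff_equal)
  define r1 where "r1 = (-BB + s)/(2*AA)"
  define r2 where "r2 = (-BB - s)/(2*AA)"
  have fac: "4*AA*(AA*r^2 + BB*r + CC) = (2*AA*r + BB - s)*(2*AA*r + BB + s)" for r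
    using s2 by algebra
  have fac2: "(2*AA*r + BB - s)*(2*AA*r + BB + s) = 4*AA^2*(r - r1)*(r - r2)" for r
    unfolding r1_def r2_def using AA by (simp add: field_simps power2_eq_square)
  have qiff: "AA*r^2 + BB*r + CC = 0 \<longleftrightarrow> r = r1 \<or> r = r2" for r
  proof -
    have "AA*r^2 + BB*r + CC = 0 \<longleftrightarrow> 4*AA*(AA*r^2 + BB*r + CC) = 0" using AA by simp
    also have "\<dots> \<longleftrightarrow> 4*AA^2*(r - r1)*(r - r2) = 0" unfolding fac fac2 ..
    also have "\<dots> \<longleftrightarrow> r = r1 \<or> r = r2" using AA by simp
    finally show ?thesis .
  qed
  have eqq: "(2*a+c)*r^2 + (a-b)*k*1*r - (2*b+c)*k*1^2 = AA*r^2 + BB*r + CC" for r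
    unfolding AA_def BB_def CC_def by (simp add: algebra_simps)
  have good: "r \<noteq> 0 \<and> 1 + r^2/k + r \<noteq> 0" if q: "AA*r^2 + BB*r + CC = 0" for r
  proof
    show "r \<noteq> 0" using q CC by auto
    show "1 + r^2/k + r \<noteq> 0"
    proof
      assume "1 + r^2/k + r = 0"
      then have h: "k + r^2 + k*r = 0" using k by (simp add: field_simps)
      have "k*(a+b+c)*(r+2) = 0" using q h unfolding AA_def BB_def CC_def by algebra
      then have "r + 2 = 0" using k n by simp
      then have r: "r = -2" by (simp add: add_eq_0_iff2)
      then have "k = 4" using h by (simp add: algebra_simps power2_eq_square)
      then show False using k4 by simp
    qed
  qed
  have r12: "r1 \<noteq> r2" unfolding r1_def r2_def using s0 AA by (simp add: field_simps)
  show ?thesis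
    apply (rule exI[of _ r1], rule exI[of _ r2])
    using r12 qiff good unfolding eqq by blast
qed

lemma roots4:
  fixes a b c :: complex
  assumes A: "2*a+c \<noteq> 0" and Bc: "2*b+c \<noteq> 0" and n: "a+b+c \<noteq> 0"
  shows "\<exists>r'. {r. (2*a+c)*r^2 + (a-b)*4*1*r - (2*b+c)*4*1^2 = 0 \<and> r \<noteq> 0 \<and> 1 + r^2/4 + r \<noteq> 0} = {r'}"
proof -
  define r' where "r' = 2*(2*b+c)/(2*a+c)"
  have fac: "(2*a+c)*r^2 + (a-b)*4*1*r - (2*b+c)*4*1^2 = (r+2)*((2*a+c)*r - 2*(2*b+c))" for r
    by (simp add: algebra_simps power2_eq_square)
  have "{r. (2*a+c)*r^2 + (a-b)*4*1*r - (2*b+c)*4*1^2 = 0 \<and> r \<noteq> 0 \<and> 1 + r^2/4 + r \<noteq> 0} = {r'}"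
  proof (intro set_eqI iffI)
    fix r assume "r \<in> {r. (2*a+c)*r^2 + (a-b)*4*1*r - (2*b+c)*4*1^2 = 0 \<and> r \<noteq> 0 \<and> 1 + r^2/4 + r \<noteq> 0}"
    then have q: "(r+2)*((2*a+c)*r - 2*(2*b+c)) = 0" and s: "1 + r^2/4 + r \<noteq> 0" unfolding fac by auto
    have "r + 2 \<noteq> 0"
    proof
      assume "r + 2 = 0" then have "r = -2" by (simp add: add_eq_0_iff2)
      then show False using s by (simp add: power2_eq_square)
    qed
    then have "(2*a+c)*r = 2*(2*b+c)" using q by simp
    then have "r = r'" unfolding r'_def using A by (simp add: field_simps)
    then show "r \<in> {r'}" by simp
  next
    fix r assume "r \<in> {r'}"
    then have r: "r = r'" by simp
    have q: "(2*a+c)*r' = 2*(2*b+c)" unfolding r'_def using A by simp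
    have nz: "r' \<noteq> 0" using A Bc by (metis divide_eq_0_iff mult_eq_0_iff zero_neq_numeral r'_def)
    have gen: "\<And>X Y::complex. 2*X/Y/2 = X/Y" by simp
    have gen2: "\<And>X Y::complex. X \<noteq> 0 \<Longrightarrow> 1 + Y/X = (X + Y)/X" by (simp add: field_simps)
    have e1: "r'/2 = (2*b+c)/(2*a+c)" unfolding r'_def by (rule gen)
    have e2: "1 + r'/2 = ((2*a+c) + (2*b+c))/(2*a+c)" unfolding e1
      using A by (rule gen2)
    have e3: "(2*a+c) + (2*b+c) = 2*(a+b+c)" by simp
    have "1 + r'/2 \<noteq> 0" unfolding e2 e3 using A n by (metis divide_eq_0_iff mult_eq_0_iff zero_neq_numeral)
    moreover have "1 + r'^2/4 + r' = (1 + r'/2)^2" by (simp add: field_simps power2_eq_square)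
    ultimately have s: "1 + r'^2/4 + r' \<noteq> 0" by simp
    show "r \<in> {r. (2*a+c)*r^2 + (a-b)*4*1*r - (2*b+c)*4*1^2 = 0 \<and> r \<noteq> 0 \<and> 1 + r^2/4 + r \<noteq> 0}"
      unfolding r fac using q nz s by simp
  qed
  then show ?thesis by blast
qed



definition Q1 :: poly3 where "Q1 = (\<lambda>m. if m = (0,0,0) then 1 else 0)"

definition QF :: poly3 where
  "QF = (\<lambda>m. if m = (1,1,0) then 4 else if m = (1,0,1) then 2 else if m = (0,1,1) then 2
     else if m = (0,0,2) then 1 else 0)"

definition QK :: "real \<Rightarrow> poly3" where
  "QK K = (let k = complex_of_real K in (\<lambda>m.
     if m = (0,0,4) then 4 else
     if m = (0,1,3) then 16 else
     if m = (0,2,2) then 16 + k else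
     if m = (0,3,1) then 2*k else
     if m = (1,0,3) then 16 else
     if m = (1,1,2) then 64 - 2*k else
     if m = (1,2,1) then 64 - 2*k else
     if m = (1,3,0) then 4*k else
     if m = (2,0,2) then 16 + k else
     if m = (2,1,1) then 64 - 2*k else
     if m = (2,2,0) then 64 - 8*k else
     if m = (3,0,1) then 2*k else
     if m = (3,1,0) then 4*k else 0))"

lemma Q1_props: "mpoly3 Q1" "Q1 \<noteq> (\<lambda>_. 0)" "peval3 Q1 p = 1"
proof -
  have "{m. Q1 m \<noteq> 0} \<subseteq> {(0,0,0)}" by (auto simp: Q1_def split: if_splits)
  then show "mpoly3 Q1" unfolding mpoly3_def using finite_subset by blast
  show "Q1 \<noteq> (\<lambda>_. 0)" unfolding Q1_def by (metis one_neq_zero)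
  show "peval3 Q1 p = 1"
    by (subst peval3_superset[where M="{(0,0,0)}"]) (auto simp: Q1_def mono3_def)
qed

lemma QF_props: "mpoly3 QF" "QF \<noteq> (\<lambda>_. 0)" "peval3 QF p = (2*p$0+p$2)*(2*p$1+p$2)"
proof -
  define M where "M = {(1::nat,1::nat,0::nat),(1,0,1),(0,1,1),(0,0,2)}"
  have "{m. QF m \<noteq> 0} \<subseteq> M" unfolding M_def by (auto simp: QF_def split: if_splits)
  then show "mpoly3 QF" unfolding mpoly3_def M_def using finite_subset by blast
  have "QF (0,0,2) \<noteq> 0" unfolding QF_def by simp
  then show "QF \<noteq> (\<lambda>_. 0)" by metis
  show "peval3 QF p = (2*p$0+p$2)*(2*p$1+p$2)"
    by (subst peval3_superset[where M=M]) (auto simp: QF_def mono3_def M_def algebra_simps power2_eq_square)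
qed

lemma QK_props: "mpoly3 (QK K)" "QK K \<noteq> (\<lambda>_. 0)"
  "peval3 (QK K) p = (2*p$0+p$2)*(2*p$1+p$2)*((p$0-p$1)^2*complex_of_real K + 4*(2*p$0+p$2)*(2*p$1+p$2))"
proof -
  define M where "M = {(0::nat,0::nat,4::nat),(0,1,3),(0,2,2),(0,3,1),(1,0,3),(1,1,2),(1,2,1),(1,3,0),
     (2,0,2),(2,1,1),(2,2,0),(3,0,1),(3,1,0)}"
  have "{m. QK K m \<noteq> 0} \<subseteq> M" unfolding M_def by (auto simp: QK_def Let_def split: if_splits)
  then show "mpoly3 (QK K)" unfolding mpoly3_def M_def using finite_subset by blast
  have "QK K (0,0,4) \<noteq> 0" unfolding QK_def Let_def by simp
  then show "QK K \<noteq> (\<lambda>_. 0)" by metis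
  show "peval3 (QK K) p = (2*p$0+p$2)*(2*p$1+p$2)*((p$0-p$1)^2*complex_of_real K + 4*(2*p$0+p$2)*(2*p$1+p$2))"
    apply (subst peval3_superset[where M=M])
      apply (simp add: M_def)
     apply (auto simp: QK_def Let_def M_def split: if_splits)[1]
    apply (simp add: M_def QK_def Let_def mono3_def)
    apply (simp add: algebra_simps power2_eq_square power3_eq_cube power4_eq_xxxx)
    done
qed



lemma nat_sum_nz:
  fixes a b c :: nat
  assumes "2 * of_nat a + of_nat c \<noteq> (0::complex)"
  shows "of_nat a + of_nat b + of_nat c \<noteq> (0::complex)"
proof
  assume h: "of_nat a + of_nat b + of_nat c = (0::complex)"
  have "of_nat (a+b+c) = (of_nat a + of_nat b + of_nat c :: complex)" by (simp only: of_nat_add)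
  then have "(of_nat (a+b+c)::complex) = 0" using h by simp
  then have "a+b+c = 0" by (simp only: of_nat_eq_0_iff)
  then have "a = 0" "c = 0" by auto
  then show False using assms by simp
qed

lemma MLdeg_K0: "is_ML_degree (Xconic 0) 0"
  unfolding is_ML_degree_def
proof (intro exI[of _ Q1] conjI allI impI)
  show "mpoly3 Q1" "Q1 \<noteq> (\<lambda>_. 0)" using Q1_props by auto
  fix u :: "nat^3"
  have "{p. crit_point (Xconic 0) u p} = {}"
  proof (rule ccontr)
    assume "{p. crit_point (Xconic 0) u p} \<noteq> {}"
    then obtain p where cp: "crit_point (Xconic 0) u p" by blast
    then have "p \<in> Xconic 0" "\<not> in_H p" unfolding crit_point_def reg_point_def by auto
    then show False unfolding Xconic_def inH_iff by simp
  qed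
  then have "crit_points (Xconic 0) u = {}" unfolding crit_points_def by simp
  then show "finite (crit_points (Xconic 0) u)" "card (crit_points (Xconic 0) u) = 0" by simp_all
qed

lemma MLdeg_K4: "is_ML_degree (Xconic 4) 1"
  unfolding is_ML_degree_def
proof (intro exI[of _ QF] conjI allI impI)
  show "mpoly3 QF" "QF \<noteq> (\<lambda>_. 0)" using QF_props by auto
  fix u :: "nat^3"
  assume "peval3 QF (\<chi> i. of_nat (u$i)) \<noteq> 0"
  then have "(2 * of_nat (u$0) + of_nat (u$2)) * (2 * of_nat (u$1) + of_nat (u$2)) \<noteq> (0::complex)"
    unfolding QF_props by simp
  then have A: "2 * of_nat (u$0) + of_nat (u$2) \<noteq> (0::complex)" and B: "2 * of_nat (u$1) + of_nat (u$2) \<noteq> (0::complex)"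
    by auto
  have n: "of_nat (u$0) + of_nat (u$1) + of_nat (u$2) \<noteq> (0::complex)" by (rule nat_sum_nz[OF A])
  obtain r' :: complex where r': "{r::complex. (2 * of_nat (u$0) + of_nat (u$2))*r^2 + (of_nat (u$0) - of_nat (u$1))*4*1*r
      - (2 * of_nat (u$1) + of_nat (u$2))*4*1^2 = 0 \<and> r \<noteq> 0 \<and> 1 + r^2/4 + r \<noteq> 0} = {r'}"
    using roots4[OF A B n] by blast
  have c4: "complex_of_real 4 = 4" by simp
  have "{r. goodr u (complex_of_real 4) r} = {r'}"
    unfolding r'[symmetric] goodr_def quadf_def c4 by (rule refl)
  then have "crit_points (Xconic 4) u = {proj_pt (Pt (complex_of_real 4) r')}"
    using crit_points_eq(1)[of 4 u] by simp
  then show "finite (crit_points (Xconic 4) u)" "card (crit_points (Xconic 4) u) = 1" by simp_all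
qed

lemma MLdeg_gen:
  assumes K: "K \<noteq> 0" "K \<noteq> 4"
  shows "is_ML_degree (Xconic K) 2"
  unfolding is_ML_degree_def
proof (intro exI[of _ "QK K"] conjI allI impI)
  show "mpoly3 (QK K)" "QK K \<noteq> (\<lambda>_. 0)" using QK_props by auto
  fix u :: "nat^3"
  define a :: complex where "a = of_nat (u$0)"
  define b :: complex where "b = of_nat (u$1)"
  define c :: complex where "c = of_nat (u$2)"
  define k where "k = complex_of_real K"
  have k1: "k \<noteq> 0" using K(1) unfolding k_def by simp
  have k2: "k \<noteq> 4"
  proof
    assume "k = 4"
    then have "complex_of_real K = complex_of_real 4" unfolding k_def by simp
    then have "K = 4" by (simp only: of_real_eq_iff)
    then show False using K(2) by simp
  qed
  note k = k1 k2
  assume "peval3 (QK K) (\<chi> i. of_nat (u$i)) \<noteq> 0"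
  then have "(2*a+c)*(2*b+c)*((a-b)^2*k + 4*(2*a+c)*(2*b+c)) \<noteq> 0"
    unfolding QK_props a_def b_def c_def k_def by simp
  then have A: "2*a+c \<noteq> 0" and B: "2*b+c \<noteq> 0" and Dq: "(a-b)^2*k + 4*(2*a+c)*(2*b+c) \<noteq> 0"
    by auto
  have n: "a+b+c \<noteq> 0" unfolding a_def b_def c_def by (rule nat_sum_nz[OF A[unfolded a_def c_def]])
  obtain r1 r2 where r12: "r1 \<noteq> r2" and rs: "{r. (2*a+c)*r^2 + (a-b)*k*1*r - (2*b+c)*k*1^2 = 0 \<and> r \<noteq> 0 \<and> 1 + r^2/k + r \<noteq> 0} = {r1, r2}"
    using roots_general[OF k A B n Dq] by blast
  have gs: "{r. goodr u k r} = {r1, r2}"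
    unfolding rs[symmetric] goodr_def quadf_def a_def b_def c_def by (rule refl)
  have ce: "crit_points (Xconic K) u = (\<lambda>r. proj_pt (Pt k r)) ` {r1, r2}"
    using crit_points_eq(1)[OF K(1), of u] gs unfolding k_def by simp
  have inj: "inj_on (\<lambda>r. proj_pt (Pt k r)) {r1, r2}"
    using crit_points_eq(2)[OF K(1), of u] gs unfolding k_def by simp
  show "finite (crit_points (Xconic K) u)" unfolding ce by simp
  show "card (crit_points (Xconic K) u) = 2" unfolding ce card_image[OF inj] using r12 by simp
qed

theorem mainTheorem2:
  fixes K :: real
  shows "(K = 4 \<longrightarrow> is_ML_degree (Xconic K) 1) \<and>
         (K = 0 \<longrightarrow> is_ML_degree (Xconic K) 0) \<and>
         (K \<noteq> 4 \<and> K \<noteq> 0 \<longrightarrow> is_ML_degree (Xconic K) 2)"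
proof (intro conjI impI)
  assume "K = 4" then show "is_ML_degree (Xconic K) 1" using MLdeg_K4 by simp
next
  assume "K = 0" then show "is_ML_degree (Xconic K) 0" using MLdeg_K0 by simp
next
  assume "K \<noteq> 4 \<and> K \<noteq> 0" then show "is_ML_degree (Xconic K) 2" using MLdeg_gen by simp
qed


end
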